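(* Let $\nu_0=0$ (so $\nu_1=1$) and $s,u>0$, $\gamma\ge 0$, and consider the ODE $\dot y=F(y)$ with $F(y)=-y(1-y)\big[s+\gamma(1-y)\big]+u(1-y)$, regarded on $\mathbb R$. Put $\hat u=s$ and, for $\gamma>0$, $\check u=\frac1\gamma\big(\frac{s+\gamma}{2}\big)^2$. (a) If $\gamma=0$, the equilibria are $\bar y_1=1$ and $\bar y_2=u/s$, with $\bar y_1=\bar y_2=1$ if $u=\hat u$. The smaller of the two is always stable; the other one (if distinct) is unstable. (b) Let $\gamma>0$. If $u>\check u$, then $\bar y_1=1$ is the only equilibrium, and it is stable. If $u\le\check u$, the equilibria are $$\bar y_1=1,\qquad \bar y_2=\tfrac12\Big(1+\tfrac s\gamma-\sqrt\sigma\Big),\qquad \bar y_3=\tfrac12\Big(1+\tfrac s\gamma+\sqrt\sigma\Big),\qquad \sigma=\Big(1+\tfrac s\gamma\Big)^2-4\tfrac u\gamma\ge 0.$$ Their positions, together with which of them are stable as equilibria in $[0,1]$, are as follows. - If $u<\hat u$ (any $\gamma>0$): $0<\bar y_2<\bar y_1=1<\bar y_3$; $\bar y_2$ is stable. - If $u=\hat u$ and $\gamma<s$: $1=\bar y_1=\bar y_2<\bar y_3=s/\gamma$; $\bar y_1=\bar y_2$ is stable. - If $u=\hat u$ and $\gamma=s$: $1=\bar y_1=\bar y_2=\bar y_3$, which is stable. - If $u=\hat u$ and $\gamma>s$: $0<\bar y_2=s/\gamma<\bar y_1=\bar y_3=1$; $\bar y_2$ is stable. - If $\hat u<u<\check u$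 and $\gamma<s$: $1=\bar y_1<\bar y_2<\bar y_3$; $\bar y_1$ is stable. - If $\hat u<u<\check u$ and $\gamma>s$: $0<\bar y_2<\bar y_3<\bar y_1=1$; $\bar y_2$ and $\bar y_1$ are stable. - If $u=\check u$ and $\gamma<s$: $1=\bar y_1<\bar y_2=\bar y_3=(\gamma+s)/(2\gamma)$; $\bar y_1$ is stable. - If $u=\check u$ and $\gamma=s$: $1=\bar y_1=\bar y_2=\bar y_3$, which is stable. - If $u=\check u$ and $\gamma>s$: $\frac12<\bar y_2=\bar y_3=(\gamma+s)/(2\gamma)<\bar y_1=1$; $\bar y_1$ is stable.
   Context: "Stable" means locally asymptotically stable. The case $\gamma=s$, $\hat u<u<\check u$ cannot occur, because $\hat u=\check u$ when $\gamma=s$; in general $\check u-\hat u=(s-\gamma)^2/(4\gamma)\ge 0$. *)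

theory Defs
  imports "HOL-Analysis.Analysis"
begin

definition Fsel :: "real \<Rightarrow> real \<Rightarrow> real \<Rightarrow> real \<Rightarrow> real" where
  "Fsel s \<gamma> u y = - y * (1 - y) * (s + \<gamma> * (1 - y)) + u * (1 - y)"

definition ode_solution :: "(real \<Rightarrow> real) \<Rightarrow> (real \<Rightarrow> real) \<Rightarrow> bool" where
  "ode_solution F x \<longleftrightarrow> (\<forall>t\<ge>0. (x has_real_derivative F (x t)) (at t within {0..}))"

definition loc_asym_stable :: "real set \<Rightarrow> (real \<Rightarrow> real) \<Rightarrow> real \<Rightarrow> bool" where
  "loc_asym_stable S F yb \<longleftrightarrow>
     (\<forall>\<epsilon>>0. \<exists>\<delta>>0. \<forall>x. ode_solution F x \<and> x 0 \<in> S \<and> \<bar>x 0 - yb\<bar> < \<delta>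
                \<longrightarrow> (\<forall>t\<ge>0. \<bar>x t - yb\<bar> < \<epsilon>)) \<and>
     (\<exists>\<delta>>0. \<forall>x. ode_solution F x \<and> x 0 \<in> S \<and> \<bar>x 0 - yb\<bar> < \<delta>
                \<longrightarrow> (x \<longlongrightarrow> yb) at_top)"

end

theory Submission
  imports Defs
begin

definition locLip :: "(real \<Rightarrow> real) \<Rightarrow> bool" where
  "locLip F \<longleftrightarrow> (\<forall>M. \<exists>L\<ge>0. \<forall>y z. \<bar>y\<bar> \<le> M \<longrightarrow> \<bar>z\<bar> \<le> M \<longrightarrow> \<bar>F y - F z\<bar> \<le> L * \<bar>y - z\<bar>)"

lemma sol_cont: "ode_solution F x \<Longrightarrow> continuous_on {0..} x"
  unfolding ode_solution_def continuous_on_eq_continuous_within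
  using DERIV_continuous by (metis atLeast_iff)

lemma sol_deriv: "ode_solution F x \<Longrightarrow> t > 0 \<Longrightarrow> (x has_real_derivative F (x t)) (at t)"
  unfolding ode_solution_def
  by (metis at_within_interior interior_real_atLeast greaterThan_iff less_imp_le)

lemma sol_reflect: "ode_solution F x \<Longrightarrow> ode_solution (\<lambda>z. - F (- z)) (\<lambda>t. - x t)"
  unfolding ode_solution_def by (auto intro!: derivative_eq_intros)

lemma locLip_reflect: "locLip F \<Longrightarrow> locLip (\<lambda>z. - F (- z))"
  unfolding locLip_def
proof (intro allI)
  fix M assume "\<forall>M. \<exists>L\<ge>0. \<forall>y z. \<bar>y\<bar> \<le> M \<longrightarrow> \<bar>z\<bar> \<le> M \<longrightarrow> \<bar>F y - F z\<bar> \<le> L * \<bar>y - z\<bar>"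
  then obtain L where "L \<ge> 0" and L: "\<forall>y z. \<bar>y\<bar> \<le> M \<longrightarrow> \<bar>z\<bar> \<le> M \<longrightarrow> \<bar>F y - F z\<bar> \<le> L * \<bar>y - z\<bar>" by blast
  show "\<exists>L\<ge>0. \<forall>y z. \<bar>y\<bar> \<le> M \<longrightarrow> \<bar>z\<bar> \<le> M \<longrightarrow> \<bar>- F (- y) - - F (- z)\<bar> \<le> L * \<bar>y - z\<bar>"
  proof (intro exI[of _ L] conjI allI impI)
    fix y z :: real assume "\<bar>y\<bar> \<le> M" "\<bar>z\<bar> \<le> M"
    then have "\<bar>F (-y) - F (-z)\<bar> \<le> L * \<bar>-y - -z\<bar>" using L[rule_format, of "-y" "-z"] by simp
    then show "\<bar>- F (- y) - - F (- z)\<bar> \<le> L * \<bar>y - z\<bar>" by (simp add: abs_minus_commute)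
  qed fact
qed

lemma locLip_cont: "locLip F \<Longrightarrow> continuous_on S F"
proof -
  assume A: "locLip F"
  have "isCont F y" for y
  proof -
    obtain L where L0: "L \<ge> 0" and L: "\<forall>a b. \<bar>a\<bar> \<le> \<bar>y\<bar> + 1 \<longrightarrow> \<bar>b\<bar> \<le> \<bar>y\<bar> + 1 \<longrightarrow> \<bar>F a - F b\<bar> \<le> L * \<bar>a - b\<bar>"
      using A unfolding locLip_def by blast
    show ?thesis unfolding isCont_def LIM_eq
    proof (intro allI impI)
      fix r :: real assume r: "r > 0"
      show "\<exists>s>0. \<forall>z. z \<noteq> y \<and> norm (z - y) < s \<longrightarrow> norm (F z - F y) < r"
      proof (intro exI[of _ "min 1 (r / (L + 1))"] conjI allI impI)
        show "0 < min 1 (r / (L + 1))" using r L0 by simp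
        fix z assume z: "z \<noteq> y \<and> norm (z - y) < min 1 (r / (L + 1))"
        have "\<bar>F z - F y\<bar> \<le> L * \<bar>z - y\<bar>" using L z by auto
        also have "\<dots> \<le> (L+1) * \<bar>z - y\<bar>" by (simp add: distrib_right)
        also have "\<dots> < (L+1) * (r / (L+1))" using z L0 by (intro mult_strict_left_mono) auto
        also have "\<dots> = r" using L0 by simp
        finally show "norm (F z - F y) < r" by simp
      qed
    qed
  qed
  then show ?thesis by (simp add: continuous_at_imp_continuous_on)
qed

lemma barrier_low:
  assumes lip: "locLip F" and sol: "ode_solution F x" and Fp: "F p \<ge> 0"
    and t0: "0 \<le> t0" and x0: "x t0 \<ge> p" and tt: "t0 \<le> t"
  shows "x t \<ge> p"
proof (rule ccontr)
  assume "\<not> p \<le> x t"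
  hence xt: "x t < p" by simp
  with x0 tt have tlt: "t0 < t" by (cases "t0 = t") auto
  obtain L where L0: "L \<ge> 0" and L: "\<forall>y z. \<bar>y\<bar> \<le> \<bar>p\<bar>+1 \<longrightarrow> \<bar>z\<bar> \<le> \<bar>p\<bar>+1 \<longrightarrow> \<bar>F y - F z\<bar> \<le> L * \<bar>y - z\<bar>"
    using lip unfolding locLip_def by blast
  have cont: "continuous_on {t0..t} x"
    using sol_cont[OF sol] by (rule continuous_on_subset) (use t0 in auto)
  define T where "T = {t0..t} \<inter> x -` {p..}"
  have clT: "closed T" unfolding T_def
    by (rule continuous_closed_preimage[OF cont]) auto
  have t0T: "t0 \<in> T" using x0 tlt by (auto simp: T_def)
  have bdd: "bdd_above T" unfolding T_def by (rule bdd_aboveI[of _ t]) auto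
  define t' where "t' = Sup T"
  have t'T: "t' \<in> T" unfolding t'_def using closed_contains_Sup[OF _ bdd clT] t0T by blast
  hence t'1: "t0 \<le> t'" "t' \<le> t" "x t' \<ge> p" by (auto simp: T_def)
  have t't: "t' < t" using t'1 xt by (cases "t' = t") auto
  have below: "x s < p" if "t' < s" "s \<le> t" for s
  proof (rule ccontr)
    assume "\<not> x s < p"
    hence "s \<in> T" using that t'1 by (auto simp: T_def)
    hence "s \<le> t'" unfolding t'_def using bdd by (rule cSup_upper)
    with that show False by simp
  qed
  obtain \<eta> where \<eta>0: "\<eta> > 0" and \<eta>: "\<forall>s\<in>{t0..t}. dist s t' < \<eta> \<longrightarrow> dist (x s) (x t') < 1"
    using cont t'1 unfolding continuous_on_iff by (metis atLeastAtMost_iff zero_less_one)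
  define t2 where "t2 = min t (t' + \<eta>/2)"
  have t2: "t' < t2" "t2 \<le> t" using t't \<eta>0 by (auto simp: t2_def)
  have xin: "p - 1 < x s \<and> x s < p" if "t' < s" "s \<le> t2" for s
  proof -
    have "dist s t' < \<eta>" using that \<eta>0 by (auto simp: t2_def dist_real_def)
    hence "dist (x s) (x t') < 1" using \<eta> that t'1 t2 by auto
    thus ?thesis using below[of s] that t2 t'1 by (auto simp: dist_real_def)
  qed
  define g where "g s = (p - x s) * exp (- L * s)" for s
  have gcont: "continuous_on {t'..t2} g" unfolding g_def
    by (intro continuous_intros continuous_on_subset[OF cont]) (use t'1 t2 in auto)
  have "g t2 \<le> g t'"
  proof (rule DERIV_nonpos_imp_decreasing_open[OF less_imp_le[OF t2(1)] _ gcont])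
    fix s assume s: "t' < s" "s < t2"
    have s0: "s > 0" using s t'1 t0 by simp
    have xd: "(x has_real_derivative F (x s)) (at s)" by (rule sol_deriv[OF sol s0])
    have "((\<lambda>s. (p - x s) * exp (- L * s)) has_real_derivative
        (- F (x s)) * exp (- L * s) + (p - x s) * (exp (- L * s) * (- L))) (at s)"
      by (rule derivative_eq_intros xd refl | simp)+
    moreover have "(- F (x s)) * exp (- L * s) + (p - x s) * (exp (- L * s) * (- L)) \<le> 0"
    proof -
      have xs: "p - 1 < x s" "x s < p" using xin s by auto
      have "\<bar>x s\<bar> \<le> \<bar>p\<bar>+1" using xs by linarith
      hence "\<bar>F (x s) - F p\<bar> \<le> L * \<bar>x s - p\<bar>" using L[rule_format, of "x s" p] by simp
      hence "- F (x s) - L * (p - x s) \<le> 0" using Fp xs by (auto simp: abs_if split: if_splits)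
      hence "(- F (x s) - L * (p - x s)) * exp (- L * s) \<le> 0"
        by (simp add: mult_nonpos_nonneg)
      thus ?thesis by (simp add: algebra_simps)
    qed
    ultimately show "\<exists>y. (g has_real_derivative y) (at s) \<and> y \<le> 0" unfolding g_def by blast
  qed
  moreover have "g t' \<le> 0" using t'1 by (simp add: g_def mult_nonpos_nonneg)
  moreover have "g t2 > 0" using xin[of t2] t2 by (simp add: g_def)
  ultimately show False by simp
qed

lemma barrier_high:
  assumes lip: "locLip F" and sol: "ode_solution F x" and Fp: "F p \<le> 0"
    and t0: "0 \<le> t0" and x0: "x t0 \<le> p" and tt: "t0 \<le> t"
  shows "x t \<le> p"
  using barrier_low[OF locLip_reflect[OF lip] sol_reflect[OF sol], of "-p" t0 t] assms by simp

lemma attract_left: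
  assumes lip: "locLip F" and sol: "ode_solution F x" and Fe: "F e = 0"
    and pos: "\<And>y. a \<le> y \<Longrightarrow> y < e \<Longrightarrow> F y > 0"
    and xa: "a \<le> x 0" and xe: "x 0 \<le> e"
  shows "(\<forall>t\<ge>0. x 0 \<le> x t \<and> x t \<le> e) \<and> (x \<longlongrightarrow> e) at_top"
proof -
  have Fnn: "F y \<ge> 0" if "a \<le> y" "y \<le> e" for y
    using pos[of y] Fe that by (cases "y = e") auto
  have bnd: "x 0 \<le> x t \<and> x t \<le> e" if "t \<ge> 0" for t
    using barrier_low[OF lip sol Fnn[OF xa xe], of 0 t] barrier_high[OF lip sol, of e 0 t] Fe xe that by auto
  have mono: "x t0 \<le> x t" if "0 \<le> t0" "t0 \<le> t" for t0 t
  proof -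
    have "F (x t0) \<ge> 0" using bnd[OF that(1)] xa by (intro Fnn) auto
    thus ?thesis using barrier_low[OF lip sol, of "x t0" t0 t] that by auto
  qed
  have lim: "(x \<longlongrightarrow> e) at_top"
    unfolding tendsto_iff
  proof (intro allI impI)
    fix \<epsilon> :: real assume \<epsilon>: "\<epsilon> > 0"
    show "\<forall>\<^sub>F t in at_top. dist (x t) e < \<epsilon>"
    proof (cases "x 0 = e")
      case True
      have "x t = e" if "t \<ge> 0" for t using bnd[OF that] True by simp
      thus ?thesis unfolding eventually_at_top_linorder
        using \<epsilon> by (intro exI[of _ 0]) (auto simp: dist_real_def)
    next
      case False
      hence x0e: "x 0 < e" using xe by simp
      define c where "c = max (x 0) (e - \<epsilon>/2)"
      have c: "x 0 \<le> c" "c < e" "e - \<epsilon>/2 \<le> c" using x0e \<epsilon> by (auto simp: c_def)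
      obtain ym where ym: "ym \<in> {x 0..c}" and ymin: "\<forall>z\<in>{x 0..c}. F ym \<le> F z"
        using continuous_attains_inf[of "{x 0..c}" F] locLip_cont[OF lip] c by auto
      define m where "m = F ym"
      have m0: "m > 0" unfolding m_def using ym c xa by (intro pos) auto
      have "\<exists>T\<ge>0. x T > c"
      proof (rule ccontr)
        assume "\<not> (\<exists>T\<ge>0. x T > c)"
        hence le: "\<forall>T\<ge>0. x T \<le> c" by auto
        define T where "T = (e - x 0) / m + 1"
        have T0: "T > 0" using m0 x0e by (simp add: T_def add_pos_nonneg)
        have "(\<lambda>s. x s - m * s) 0 \<le> (\<lambda>s. x s - m * s) T"
        proof (rule DERIV_nonneg_imp_increasing_open[OF less_imp_le[OF T0]])
          fix s assume s: "0 < s" "s < T"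
          have "((\<lambda>s. x s - m * s) has_real_derivative F (x s) - m) (at s)"
            by (rule derivative_eq_intros sol_deriv[OF sol s(1)] refl | simp)+
          moreover have "F (x s) \<ge> m" unfolding m_def
            using ymin bnd[of s] le[rule_format, of s] s by auto
          ultimately show "\<exists>y. ((\<lambda>s. x s - m * s) has_real_derivative y) (at s) \<and> 0 \<le> y"
            by (intro exI[of _ "F (x s) - m"]) auto
        next
          show "continuous_on {0..T} (\<lambda>s. x s - m * s)"
            by (intro continuous_intros continuous_on_subset[OF sol_cont[OF sol]]) auto
        qed
        hence "x T \<ge> x 0 + m * T" by simp
        also have "m * T = (e - x 0) + m" using m0 by (simp add: T_def field_simps)
        finally have "x T > e" using m0 by simp
        thus False using bnd[of T] T0 by simp
      qed
      then obtain T where T: "T \<ge> 0" "x T > c" by blast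
      show ?thesis unfolding eventually_at_top_linorder
      proof (intro exI[of _ T] allI impI)
        fix t assume "t \<ge> T"
        hence "x t \<ge> x T" "x t \<le> e" using mono[of T t] bnd[of t] T by auto
        thus "dist (x t) e < \<epsilon>" using T c \<epsilon> by (auto simp: dist_real_def)
      qed
    qed
  qed
  show ?thesis using bnd lim by blast
qed

lemma attract_right:
  assumes lip: "locLip F" and sol: "ode_solution F x" and Fe: "F e = 0"
    and neg: "\<And>y. e < y \<Longrightarrow> y \<le> b \<Longrightarrow> F y < 0"
    and xb: "x 0 \<le> b" and xe: "e \<le> x 0"
  shows "(\<forall>t\<ge>0. e \<le> x t \<and> x t \<le> x 0) \<and> (x \<longlongrightarrow> e) at_top"
proof -
  have "(\<forall>t\<ge>0. - x 0 \<le> - x t \<and> - x t \<le> - e) \<and> ((\<lambda>t. - x t) \<longlongrightarrow> - e) at_top"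
  proof (rule attract_left[OF locLip_reflect[OF lip] sol_reflect[OF sol], of "-e" "-b"])
    show "- F (- (- e)) = 0" using Fe by simp
    fix y :: real assume "- b \<le> y" "y < - e"
    thus "0 < - F (- y)" using neg[of "-y"] by simp
  qed (use xb xe in auto)
  thus ?thesis by (auto dest: tendsto_minus_cancel)
qed

lemma stable_crit:
  assumes lip: "locLip F" and Fe: "F e = 0" and ab: "a \<le> e" "e \<le> b"
    and pos: "\<And>y. a \<le> y \<Longrightarrow> y < e \<Longrightarrow> F y > 0"
    and neg: "\<And>y. e < y \<Longrightarrow> y \<le> b \<Longrightarrow> F y < 0"
    and d0: "d0 > 0" and dS: "\<And>y. y \<in> S \<Longrightarrow> \<bar>y - e\<bar> < d0 \<Longrightarrow> a \<le> y \<and> y \<le> b"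
  shows "loc_asym_stable S F e"
proof -
  have main: "(\<forall>t\<ge>0. \<bar>x t - e\<bar> \<le> \<bar>x 0 - e\<bar>) \<and> (x \<longlongrightarrow> e) at_top"
    if sol: "ode_solution F x" and xS: "x 0 \<in> S" and xd: "\<bar>x 0 - e\<bar> < d0" for x
  proof (cases "x 0 \<le> e")
    case True
    thus ?thesis using attract_left[OF lip sol Fe pos, of a] dS[OF xS xd] by fastforce
  next
    case False
    thus ?thesis using attract_right[OF lip sol Fe neg, of b] dS[OF xS xd] by fastforce
  qed
  show ?thesis unfolding loc_asym_stable_def
  proof (intro conjI allI impI)
    fix \<epsilon> :: real assume \<epsilon>: "\<epsilon> > 0"
    show "\<exists>\<delta>>0. \<forall>x. ode_solution F x \<and> x 0 \<in> S \<and> \<bar>x 0 - e\<bar> < \<delta> \<longrightarrow> (\<forall>t\<ge>0. \<bar>x t - e\<bar> < \<epsilon>)"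
    proof (intro exI[of _ "min \<epsilon> d0"] conjI allI impI)
      fix x :: "real \<Rightarrow> real" and t :: real assume "ode_solution F x \<and> x 0 \<in> S \<and> \<bar>x 0 - e\<bar> < min \<epsilon> d0" "0 \<le> t"
      thus "\<bar>x t - e\<bar> < \<epsilon>" using main[of x] by fastforce
    qed (use \<epsilon> d0 in auto)
  next
    show "\<exists>\<delta>>0. \<forall>x. ode_solution F x \<and> x 0 \<in> S \<and> \<bar>x 0 - e\<bar> < \<delta> \<longrightarrow> (x \<longlongrightarrow> e) at_top"
      using main d0 by blast
  qed
qed


lemma exist_down:
  fixes F :: "real \<Rightarrow> real"
  assumes ab: "a < x0" "x0 < b" and neg: "\<And>y. a < y \<Longrightarrow> y < b \<Longrightarrow> F y < 0"
    and cont: "continuous_on {a<..<b} F"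
    and L0: "L > 0" and lipa: "\<And>y. a < y \<Longrightarrow> y \<le> x0 \<Longrightarrow> - F y \<le> L * (y - a)"
  shows "\<exists>x. ode_solution F x \<and> x 0 = x0 \<and> (\<forall>t\<ge>0. a < x t \<and> x t \<le> x0)"
proof -
  define g where "g z = 1 / F z" for z
  have gcont: "continuous_on {c..d} g" if "a < c" "d < b" for c d
  proof -
    have "\<forall>z\<in>{c..d}. F z \<noteq> 0" using that neg by (metis atLeastAtMost_iff less_le_trans le_less_trans less_irrefl)
    moreover have "{c..d} \<subseteq> {a<..<b}" using that by auto
    ultimately show ?thesis unfolding g_def
      by (intro continuous_intros continuous_on_subset[OF cont]) auto
  qed
  have gint: "g integrable_on {c..d}" if "a < c" "d < b" for c d
    by (rule integrable_continuous_interval[OF gcont[OF that]])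
  define H where "H y = (if y \<le> x0 then - integral {y..x0} g else integral {x0..y} g)" for y
  have Hrep: "H y = integral {c..y} g - integral {c..x0} g"
    if "a < c" "c \<le> x0" "c \<le> y" "y < b" for c y
  proof (cases "y \<le> x0")
    case True
    have "integral {c..y} g + integral {y..x0} g = integral {c..x0} g"
      by (rule Henstock_Kurzweil_Integration.integral_combine) (use that True ab in \<open>auto intro!: gint\<close>)
    thus ?thesis using True by (simp add: H_def)
  next
    case False
    have "integral {c..x0} g + integral {x0..y} g = integral {c..y} g"
      by (rule Henstock_Kurzweil_Integration.integral_combine) (use that False ab in \<open>auto intro!: gint\<close>)
    thus ?thesis using False by (simp add: H_def)
  qed
  have Hder: "(H has_real_derivative g y) (at y)" if y: "a < y" "y < b" for y
  proof -
    define c where "c = (a + min y x0) / 2"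
    define d where "d = (y + b) / 2"
    have cd: "a < c" "c < y" "c \<le> x0" "y < d" "d < b" using y ab by (auto simp: c_def d_def)
    have "((\<lambda>z. integral {c..z} g) has_real_derivative g y) (at y within {c..d})"
      by (rule integral_has_real_derivative[OF gcont]) (use cd in auto)
    hence "((\<lambda>z. integral {c..z} g) has_real_derivative g y) (at y)"
      using at_within_interior[of y "{c..d}"] cd by simp
    hence "((\<lambda>z. integral {c..z} g - integral {c..x0} g) has_real_derivative g y) (at y)"
      by (rule derivative_eq_intros) auto
    thus ?thesis
      by (rule has_field_derivative_transform_within_open[of _ _ _ "{c<..<d}"])
         (use cd in \<open>auto intro!: Hrep[symmetric]\<close>)
  qed
  have gneg: "g y < 0" if "a < y" "y < b" for y using neg[OF that] by (simp add: g_def)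
  have Hcont: "isCont H y" if "a < y" "y < b" for y using Hder[OF that] by (rule DERIV_isCont)
  have Hcont_on: "continuous_on {c..d} H" if "a < c" "d < b" for c d
    using Hcont that by (intro continuous_at_imp_continuous_on) auto
  have Hx0: "H x0 = 0" by (simp add: H_def)
  have Hdec: "H z < H y" if "a < y" "y < z" "z < b" for y z
    by (rule DERIV_neg_imp_decreasing[OF that(2)]) (use that Hder gneg in \<open>force\<close>)
  have Hbig: "H y \<ge> (ln (x0 - a) - ln (y - a)) / L" if "a < y" "y \<le> x0" for y
  proof -
    define K where "K w = H w - (ln (x0 - a) - ln (w - a)) / L" for w
    have "K x0 \<le> K y"
    proof (rule DERIV_nonpos_imp_nonincreasing[OF that(2)])
      fix w assume w: "y \<le> w" "w \<le> x0"
      hence wa: "a < w" "w < b" using that ab by auto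
      have d1: "((\<lambda>w. ln (w - a)) has_real_derivative (1 / (w - a))) (at w)"
        using wa by (auto intro!: derivative_eq_intros)
      have "(K has_real_derivative g w - (0 - 1 / (w - a)) / L) (at w)"
        unfolding K_def
        by (intro DERIV_diff Hder[OF wa] DERIV_cdivide DERIV_const d1)
      moreover have "g w - (0 - 1 / (w - a)) / L \<le> 0"
      proof -
        have Fw: "0 < - F w" "- F w \<le> L * (w - a)" using neg[OF wa] lipa[OF wa(1)] w by auto
        have p: "L * (w - a) > 0" using L0 wa by simp
        have q: "L * (w - a) * F w < 0" using p Fw by (simp add: mult_pos_neg)
        have "1 / (L * (w - a)) \<le> 1 / (- F w)"
          by (rule divide_left_mono) (use Fw p q in auto)
        moreover have "g w = - (1 / (- F w))" by (simp add: g_def)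
        moreover have "(0 - 1 / (w - a)) / L = - (1 / (L * (w - a)))" by (simp add: mult.commute)
        ultimately show ?thesis by linarith
      qed
      ultimately show "\<exists>D. (K has_real_derivative D) (at w) \<and> D \<le> 0" by blast
    qed
    thus ?thesis by (simp add: K_def Hx0)
  qed
  define x1 where "x1 = (x0 + b) / 2"
  have x1: "x0 < x1" "x1 < b" using ab by (auto simp: x1_def)
  define T0 where "T0 = H x1"
  have T0: "T0 < 0" using Hdec[of x0 x1] ab x1 Hx0 by (simp add: T0_def)
  have ex: "\<exists>y. a < y \<and> y < b \<and> H y = t" if t: "T0 < t" for t
  proof -
    define c where "c = a + (x0 - a) * exp (- (L * \<bar>t\<bar> + 1))"
    have c: "a < c" "c \<le> x0"
    proof -
      have "L * \<bar>t\<bar> \<ge> 0" using L0 by simp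
      hence "exp (- (L * \<bar>t\<bar> + 1)) \<le> 1" by simp
      hence "(x0 - a) * exp (- (L * \<bar>t\<bar> + 1)) \<le> (x0 - a) * 1"
        using ab by (intro mult_left_mono) auto
      thus "c \<le> x0" by (simp add: c_def)
      show "a < c" using ab by (simp add: c_def)
    qed
    have "ln (c - a) = ln (x0 - a) - (L * \<bar>t\<bar> + 1)"
      using ab by (simp add: c_def ln_mult)
    hence "H c \<ge> (L * \<bar>t\<bar> + 1) / L" using Hbig[OF c] by simp
    moreover have "(L * \<bar>t\<bar> + 1) / L > t" using L0 
    proof -
      have "(L * \<bar>t\<bar> + 1) / L = \<bar>t\<bar> + 1 / L" using L0 by (simp add: field_simps)
      moreover have "1 / L > 0" using L0 by simp
      ultimately show ?thesis by linarith
    qed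
    ultimately have "t \<le> H c" by simp
    moreover have "c \<le> x1" using c x1 by simp
    ultimately obtain y where "c \<le> y" "y \<le> x1" "H y = t"
      using IVT2'[of H x1 t c] t Hcont_on[of c x1] c x1 by (auto simp: T0_def)
    thus ?thesis using c x1 by (intro exI[of _ y]) auto
  qed
  have uniq: "y = z" if "a < y" "y < b" "a < z" "z < b" "H y = H z" for y z
    using Hdec[of y z] Hdec[of z y] that by (cases y z rule: linorder_cases) auto
  define xs where "xs t = (THE y. a < y \<and> y < b \<and> H y = t)" for t
  have xs: "a < xs t \<and> xs t < b \<and> H (xs t) = t" if "T0 < t" for t
  proof -
    have "\<exists>!y. a < y \<and> y < b \<and> H y = t" using ex[OF that] uniq by blast
    thus ?thesis unfolding xs_def by (rule theI')
  qed
  have xsH: "xs (H y) = y" if "a < y" "y < b" for y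
    unfolding xs_def by (rule the_equality) (use that uniq in auto)
  have xs0: "xs 0 = x0" using xsH[of x0] ab Hx0 by simp
  have xsb: "a < xs t \<and> xs t \<le> x0" if "t \<ge> 0" for t
  proof -
    have h: "a < xs t" "xs t < b" "H (xs t) = t" using xs[of t] that T0 by auto
    have "xs t \<le> x0"
    proof (rule ccontr)
      assume "\<not> xs t \<le> x0"
      hence "H (xs t) < H x0" using Hdec[of x0 "xs t"] h ab by simp
      thus False using h Hx0 that by simp
    qed
    thus ?thesis using h by simp
  qed
  have xsd: "(xs has_real_derivative F (xs t)) (at t)" if t: "T0 < t" for t
  proof -
    have h: "a < xs t" "xs t < b" "H (xs t) = t" using xs[OF t] by auto
    define d where "d = min (xs t - a) (b - xs t) / 2"
    have d: "d > 0" using h by (simp add: d_def)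
    have ic: "isCont xs (H (xs t))"
    proof (rule isCont_inverse_function[where x="xs t" and f=H and g=xs, OF d])
      fix z assume z: "\<bar>z - xs t\<bar> \<le> d"
      have "d \<le> (xs t - a)/2" "d \<le> (b - xs t)/2" by (auto simp: d_def)
      hence zin: "a < z" "z < b" using z h by (auto simp: abs_le_iff)
      show "xs (H z) = z" by (rule xsH[OF zin])
      show "isCont H z" by (rule Hcont[OF zin])
    qed
    have "(xs has_real_derivative inverse (g (xs t))) (at t)"
    proof (rule DERIV_inverse_function[where f=H and g=xs and x=t and a=T0 and b="t + 1"])
      show "(H has_real_derivative g (xs t)) (at (xs t))" using Hder h by simp
      show "g (xs t) \<noteq> 0" using gneg h by (metis less_irrefl)
      show "isCont xs t" using ic h by simp
      fix y assume "T0 < y" "y < t + 1"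
      thus "H (xs y) = y" using xs by simp
    qed (use t in auto)
    thus ?thesis by (simp add: g_def)
  qed
  have "ode_solution F xs" unfolding ode_solution_def
    using xsd T0 by (auto intro: has_field_derivative_at_within)
  thus ?thesis using xs0 xsb by blast
qed

lemma exist_up:
  fixes F :: "real \<Rightarrow> real"
  assumes ab: "a < x0" "x0 < b" and pos: "\<And>y. a < y \<Longrightarrow> y < b \<Longrightarrow> F y > 0"
    and cont: "continuous_on {a<..<b} F"
    and L0: "L > 0" and lipb: "\<And>y. x0 \<le> y \<Longrightarrow> y < b \<Longrightarrow> F y \<le> L * (b - y)"
  shows "\<exists>x. ode_solution F x \<and> x 0 = x0 \<and> (\<forall>t\<ge>0. x0 \<le> x t \<and> x t < b)"
proof -
  have c2: "continuous_on {-b<..<-a} (\<lambda>z. - F (- z))"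
  proof -
    have "continuous_on {-b<..<-a} (\<lambda>z. F (- z))"
      by (rule continuous_on_compose2[OF cont]) (auto intro!: continuous_intros)
    thus ?thesis by (rule continuous_on_minus)
  qed
  obtain x where x: "ode_solution (\<lambda>z. - F (- z)) x" "x 0 = - x0" "\<forall>t\<ge>0. - b < x t \<and> x t \<le> - x0"
  proof -
    have "\<exists>x. ode_solution (\<lambda>z. - F (- z)) x \<and> x 0 = - x0 \<and> (\<forall>t\<ge>0. - b < x t \<and> x t \<le> - x0)"
    proof (rule exist_down[OF _ _ _ c2 L0])
      fix y assume "- b < y" "y < - a"
      thus "- F (- y) < 0" using pos[of "-y"] by simp
    next
      fix y assume "- b < y" "y \<le> - x0"
      thus "- (- F (- y)) \<le> L * (y - - b)" using lipb[of "-y"] by (simp add: algebra_simps)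
    qed (use ab in auto)
    thus ?thesis using that by blast
  qed
  have "ode_solution (\<lambda>z. - (- F (- (- z)))) (\<lambda>t. - x t)" by (rule sol_reflect[OF x(1)])
  hence "ode_solution F (\<lambda>t. - x t)" by simp
  thus ?thesis using x(2,3) by (intro exI[of _ "\<lambda>t. - x t"]) force
qed

lemma unstable_crit:
  assumes "\<And>\<delta>. \<delta> > 0 \<Longrightarrow> \<exists>x. ode_solution F x \<and> x 0 \<in> S \<and> \<bar>x 0 - e\<bar> < \<delta> \<and> x 0 \<noteq> e \<and>
             (\<forall>t\<ge>0. \<bar>x t - e\<bar> \<ge> \<bar>x 0 - e\<bar>)"
  shows "\<not> loc_asym_stable S F e"
proof
  assume "loc_asym_stable S F e"
  then obtain \<delta> where \<delta>: "\<delta> > 0" and conv: "\<forall>x. ode_solution F x \<and> x 0 \<in> S \<and> \<bar>x 0 - e\<bar> < \<delta> \<longrightarrow> (x \<longlongrightarrow> e) at_top"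
    unfolding loc_asym_stable_def by blast
  obtain x where x: "ode_solution F x" "x 0 \<in> S" "\<bar>x 0 - e\<bar> < \<delta>" "x 0 \<noteq> e"
      and far: "\<forall>t\<ge>0. \<bar>x t - e\<bar> \<ge> \<bar>x 0 - e\<bar>"
    using assms[OF \<delta>] by blast
  have "(x \<longlongrightarrow> e) at_top" using conv x by blast
  moreover have "\<bar>x 0 - e\<bar> > 0" using x(4) by simp
  ultimately have "\<forall>\<^sub>F t in at_top. dist (x t) e < \<bar>x 0 - e\<bar>" unfolding tendsto_iff by blast
  then obtain N where N: "\<forall>t\<ge>N. dist (x t) e < \<bar>x 0 - e\<bar>" unfolding eventually_at_top_linorder by blast
  have "dist (x (max N 0)) e < \<bar>x 0 - e\<bar>" using N by simp
  moreover have "\<bar>x (max N 0) - e\<bar> \<ge> \<bar>x 0 - e\<bar>" using far by simp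
  ultimately show False by (simp add: dist_real_def)
qed


lemma Fsel_fact: "Fsel s \<gamma> u y = (1 - y) * (\<gamma> * y\<^sup>2 - (s + \<gamma>) * y + u)"
  unfolding Fsel_def by (simp add: algebra_simps power2_eq_square)

lemma Fsel_diff: "Fsel s \<gamma> u y - Fsel s \<gamma> u z =
   (y - z) * (- \<gamma> * (y*y + y*z + z*z) + (2*\<gamma> + s) * (y + z) - (s + \<gamma> + u))"
  unfolding Fsel_def by (simp add: algebra_simps power2_eq_square)

lemma locLip_Fsel: "locLip (Fsel s \<gamma> u)"
  unfolding locLip_def
proof (intro allI)
  fix M :: real
  define L where "L = \<bar>\<gamma>\<bar> * (3 * (M*M)) + \<bar>2*\<gamma> + s\<bar> * (2 * \<bar>M\<bar>) + \<bar>s + \<gamma> + u\<bar>"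
  show "\<exists>L\<ge>0. \<forall>y z. \<bar>y\<bar> \<le> M \<longrightarrow> \<bar>z\<bar> \<le> M \<longrightarrow> \<bar>Fsel s \<gamma> u y - Fsel s \<gamma> u z\<bar> \<le> L * \<bar>y - z\<bar>"
  proof (intro exI[of _ L] conjI allI impI)
    show "L \<ge> 0" unfolding L_def by simp
    fix y z :: real assume y: "\<bar>y\<bar> \<le> M" and z: "\<bar>z\<bar> \<le> M"
    have M0: "0 \<le> M" using y by simp
    have "\<bar>y\<bar>*\<bar>y\<bar> \<le> M*M" "\<bar>y\<bar>*\<bar>z\<bar> \<le> M*M" "\<bar>z\<bar>*\<bar>z\<bar> \<le> M*M"
      using mult_mono[OF y y M0 abs_ge_zero] mult_mono[OF y z M0 abs_ge_zero] mult_mono[OF z z M0 abs_ge_zero] by auto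
    hence yy: "\<bar>y*y\<bar> \<le> M*M" "\<bar>y*z\<bar> \<le> M*M" "\<bar>z*z\<bar> \<le> M*M"
      by (simp_all add: abs_mult)
    have q1: "\<bar>y*y + y*z + z*z\<bar> \<le> 3 * (M*M)" using yy by linarith
    have q2: "\<bar>y + z\<bar> \<le> 2 * \<bar>M\<bar>" using y z by linarith
    have "\<bar>- \<gamma> * (y*y + y*z + z*z) + (2*\<gamma> + s) * (y + z) - (s + \<gamma> + u)\<bar>
        \<le> \<bar>\<gamma>\<bar> * \<bar>y*y + y*z + z*z\<bar> + \<bar>2*\<gamma> + s\<bar> * \<bar>y + z\<bar> + \<bar>s + \<gamma> + u\<bar>"
    proof -
      have "\<bar>- \<gamma> * (y*y + y*z + z*z)\<bar> = \<bar>\<gamma>\<bar> * \<bar>y*y + y*z + z*z\<bar>" by (simp add: abs_mult)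
      moreover have "\<bar>(2*\<gamma> + s) * (y + z)\<bar> = \<bar>2*\<gamma> + s\<bar> * \<bar>y + z\<bar>" by (simp add: abs_mult)
      ultimately show ?thesis by arith
    qed
    also have "\<dots> \<le> L" unfolding L_def
      using q1 q2 by (intro add_mono mult_left_mono) auto
    finally have "\<bar>- \<gamma> * (y*y + y*z + z*z) + (2*\<gamma> + s) * (y + z) - (s + \<gamma> + u)\<bar> \<le> L" .
    thus "\<bar>Fsel s \<gamma> u y - Fsel s \<gamma> u z\<bar> \<le> L * \<bar>y - z\<bar>"
      unfolding Fsel_diff abs_mult by (subst mult.commute, rule mult_right_mono) simp_all
  qed
qed

lemma stab01:
  assumes lip: "locLip F" and Fe: "F e = 0" and ab: "a \<le> e" "e \<le> b"
    and a': "a < e \<or> a \<le> 0" and b': "e < b \<or> 1 \<le> b"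
    and pos: "\<And>y. a \<le> y \<Longrightarrow> y < e \<Longrightarrow> F y > 0"
    and neg: "\<And>y. e < y \<Longrightarrow> y \<le> b \<Longrightarrow> F y < 0"
  shows "loc_asym_stable {0..1} F e"
proof (rule stable_crit[OF lip Fe ab pos neg])
  define d0 where "d0 = min (if a < e then e - a else 1) (if e < b then b - e else 1)"
  show "d0 > 0" by (simp add: d0_def)
  fix y :: real assume "y \<in> {0..1}" "\<bar>y - e\<bar> < d0"
  thus "a \<le> y \<and> y \<le> b" using a' b' by (auto simp: d0_def abs_less_iff split: if_splits)
qed auto

lemma unstab_down:
  assumes lip: "locLip F" and ae: "a < e" and neg: "\<And>y. a < y \<Longrightarrow> y < e \<Longrightarrow> F y < 0"
    and L0: "L > 0" and lipa: "\<And>y. a < y \<Longrightarrow> y < e \<Longrightarrow> - F y \<le> L * (y - a)"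
    and S: "{a<..<e} \<subseteq> S"
  shows "\<not> loc_asym_stable S F e"
proof (rule unstable_crit)
  fix \<delta> :: real assume \<delta>: "\<delta> > 0"
  define x0 where "x0 = max ((a + e)/2) (e - \<delta>/2)"
  have "x0 \<ge> (a + e)/2" "x0 \<ge> e - \<delta>/2" "x0 = (a + e)/2 \<or> x0 = e - \<delta>/2"
    unfolding x0_def by (rule max.cobounded1, rule max.cobounded2, simp add: max_def)
  hence x0: "a < x0" "x0 < e" "e - x0 < \<delta>" using ae \<delta> by auto
  obtain x where x: "ode_solution F x" "x 0 = x0" "\<forall>t\<ge>0. a < x t \<and> x t \<le> x0"
    using exist_down[OF x0(1,2) neg _ L0 lipa] locLip_cont[OF lip] x0 by fastforce
  show "\<exists>x. ode_solution F x \<and> x 0 \<in> S \<and> \<bar>x 0 - e\<bar> < \<delta> \<and> x 0 \<noteq> e \<and> (\<forall>t\<ge>0. \<bar>x 0 - e\<bar> \<le> \<bar>x t - e\<bar>)"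
    using x x0 S by (intro exI[of _ x]) auto
qed

lemma unstab_up:
  assumes lip: "locLip F" and eb: "e < b" and pos: "\<And>y. e < y \<Longrightarrow> y < b \<Longrightarrow> F y > 0"
    and L0: "L > 0" and lipb: "\<And>y. e < y \<Longrightarrow> y < b \<Longrightarrow> F y \<le> L * (b - y)"
    and S: "{e<..<b} \<subseteq> S"
  shows "\<not> loc_asym_stable S F e"
proof (rule unstable_crit)
  fix \<delta> :: real assume \<delta>: "\<delta> > 0"
  define x0 where "x0 = min ((e + b)/2) (e + \<delta>/2)"
  have "x0 \<le> (e + b)/2" "x0 \<le> e + \<delta>/2" "x0 = (e + b)/2 \<or> x0 = e + \<delta>/2"
    unfolding x0_def by (rule min.cobounded1, rule min.cobounded2, simp add: min_def)
  hence x0: "e < x0" "x0 < b" "x0 - e < \<delta>" using eb \<delta> by auto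
  obtain x where x: "ode_solution F x" "x 0 = x0" "\<forall>t\<ge>0. x0 \<le> x t \<and> x t < b"
    using exist_up[OF x0(1,2) pos _ L0 lipb] locLip_cont[OF lip] x0 by fastforce
  show "\<exists>x. ode_solution F x \<and> x 0 \<in> S \<and> \<bar>x 0 - e\<bar> < \<delta> \<and> x 0 \<noteq> e \<and> (\<forall>t\<ge>0. \<bar>x 0 - e\<bar> \<le> \<bar>x t - e\<bar>)"
    using x x0 S by (intro exI[of _ x]) auto
qed


lemma bnd_helper:
  fixes A B c D g :: real
  assumes "0 \<le> A" "A \<le> 1" "0 \<le> B" "B \<le> c" "0 \<le> D" "0 \<le> g"
  shows "g * A * B * D \<le> (g * c) * D"
proof -
  have "A * B \<le> 1 * c" by (rule mult_mono) (use assms in auto)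
  hence "(g * D) * (A * B) \<le> (g * D) * c" using assms by (intro mult_left_mono) auto
  thus ?thesis by (simp add: algebra_simps)
qed

lemma Stab_one:
  assumes pos: "\<And>y. 0 \<le> y \<Longrightarrow> y < 1 \<Longrightarrow> Fsel s \<gamma> u y > 0"
  shows "{y \<in> {0..1}. Fsel s \<gamma> u y = 0 \<and> loc_asym_stable {0..1} (Fsel s \<gamma> u) y} = {1}"
proof -
  have F1: "Fsel s \<gamma> u 1 = 0" by (simp add: Fsel_def)
  have "loc_asym_stable {0..1} (Fsel s \<gamma> u) 1"
    by (rule stab01[OF locLip_Fsel F1, where a=0 and b=1]) (use pos in auto)
  moreover have "y = 1" if "y \<in> {0..1}" "Fsel s \<gamma> u y = 0" for y
    using pos[of y] that by (cases "y = 1") auto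
  ultimately show ?thesis using F1 by auto
qed

lemma Stab_C1:
  assumes g0: "\<gamma> > 0" and Ff: "\<And>y. Fsel s \<gamma> u y = \<gamma> * (1 - y) * (y - y2) * (y - y3)"
    and y: "0 < y2" "y2 < 1" "1 \<le> y3"
  shows "{y \<in> {0..1}. Fsel s \<gamma> u y = 0 \<and> loc_asym_stable {0..1} (Fsel s \<gamma> u) y} = {y2}"
proof -
  let ?F = "Fsel s \<gamma> u"
  have z: "?F y = 0 \<longleftrightarrow> y = 1 \<or> y = y2 \<or> y = y3" for y using g0 by (simp add: Ff)
  have st: "loc_asym_stable {0..1} ?F y2"
  proof (rule stab01[OF locLip_Fsel, where a=0 and b="(y2 + 1)/2"])
    fix y assume "0 \<le> y" "y < y2"
    thus "?F y > 0" using y g0 unfolding Ff by (simp add: zero_less_mult_iff mult_less_0_iff)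
  next
    fix y assume "y2 < y" "y \<le> (y2 + 1)/2"
    thus "?F y < 0" using y g0 unfolding Ff by (simp add: zero_less_mult_iff mult_less_0_iff)
  qed (use y z in auto)
  have un: "\<not> loc_asym_stable {0..1} ?F 1"
  proof (rule unstab_down[OF locLip_Fsel, where a=y2 and e=1 and L="\<gamma> * y3"])
    fix y assume yy: "y2 < y" "y < 1"
    thus "?F y < 0" using y g0 unfolding Ff by (simp add: zero_less_mult_iff mult_less_0_iff)
    have "\<gamma> * (1 - y) * (y3 - y) * (y - y2) \<le> (\<gamma> * y3) * (y - y2)"
      by (rule bnd_helper) (use yy y g0 in auto)
    thus "- ?F y \<le> \<gamma> * y3 * (y - y2)" unfolding Ff by (simp add: algebra_simps)
  qed (use y g0 in auto)
  show ?thesis using st un z y by auto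
qed

lemma Stab_C4:
  assumes g0: "\<gamma> > 0" and Ff: "\<And>y. Fsel s \<gamma> u y = \<gamma> * (1 - y) * (y - y2) * (y - y3)"
    and y: "0 < y2" "y2 < y3" "y3 < 1"
  shows "{y \<in> {0..1}. Fsel s \<gamma> u y = 0 \<and> loc_asym_stable {0..1} (Fsel s \<gamma> u) y} = {y2, 1}"
proof -
  let ?F = "Fsel s \<gamma> u"
  have z: "?F y = 0 \<longleftrightarrow> y = 1 \<or> y = y2 \<or> y = y3" for y using g0 by (simp add: Ff)
  have st: "loc_asym_stable {0..1} ?F y2"
  proof (rule stab01[OF locLip_Fsel, where a=0 and b="(y2 + y3)/2"])
    fix y assume "0 \<le> y" "y < y2"
    thus "?F y > 0" using y g0 unfolding Ff by (simp add: zero_less_mult_iff mult_less_0_iff)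
  next
    fix y assume "y2 < y" "y \<le> (y2 + y3)/2"
    thus "?F y < 0" using y g0 unfolding Ff by (simp add: zero_less_mult_iff mult_less_0_iff)
  qed (use y z in auto)
  have st1: "loc_asym_stable {0..1} ?F 1"
  proof (rule stab01[OF locLip_Fsel, where a="(y3 + 1)/2" and b=1])
    fix y assume "(y3 + 1)/2 \<le> y" "y < 1"
    thus "?F y > 0" using y g0 unfolding Ff by (simp add: zero_less_mult_iff mult_less_0_iff)
  qed (use y z in auto)
  have un: "\<not> loc_asym_stable {0..1} ?F y3"
  proof (rule unstab_down[OF locLip_Fsel, where a=y2 and e=y3 and L="\<gamma> * 1"])
    fix y assume yy: "y2 < y" "y < y3"
    thus "?F y < 0" using y g0 unfolding Ff by (simp add: zero_less_mult_iff mult_less_0_iff)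
    have "\<gamma> * (1 - y) * (y3 - y) * (y - y2) \<le> (\<gamma> * 1) * (y - y2)"
      by (rule bnd_helper) (use yy y g0 in auto)
    thus "- ?F y \<le> \<gamma> * 1 * (y - y2)" unfolding Ff by (simp add: algebra_simps)
  qed (use y g0 in auto)
  show ?thesis using st st1 un z y by auto
qed

lemma Stab_C5:
  assumes g0: "\<gamma> > 0" and Ff: "\<And>y. Fsel s \<gamma> u y = \<gamma> * (1 - y) * (y - y2) * (y - y2)"
    and y: "0 < y2" "y2 < 1"
  shows "{y \<in> {0..1}. Fsel s \<gamma> u y = 0 \<and> loc_asym_stable {0..1} (Fsel s \<gamma> u) y} = {1}"
proof -
  let ?F = "Fsel s \<gamma> u"
  have z: "?F y = 0 \<longleftrightarrow> y = 1 \<or> y = y2" for y using g0 by (auto simp: Ff)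
  have st1: "loc_asym_stable {0..1} ?F 1"
  proof (rule stab01[OF locLip_Fsel, where a="(y2 + 1)/2" and b=1])
    fix y assume "(y2 + 1)/2 \<le> y" "y < 1"
    thus "?F y > 0" using y g0 unfolding Ff by (simp add: zero_less_mult_iff mult_less_0_iff)
  qed (use y z in auto)
  have un: "\<not> loc_asym_stable {0..1} ?F y2"
  proof (rule unstab_up[OF locLip_Fsel, where e=y2 and b=1 and L="\<gamma> * 1"])
    fix y assume yy: "y2 < y" "y < 1"
    thus "?F y > 0" using y g0 unfolding Ff by (simp add: zero_less_mult_iff mult_less_0_iff)
    have "\<gamma> * (y - y2) * (y - y2) * (1 - y) \<le> (\<gamma> * 1) * (1 - y)"
    proof -
      have "(y - y2) * (y - y2) \<le> 1 * 1" by (rule mult_mono) (use yy y in auto)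
      hence "(\<gamma> * (1 - y)) * ((y - y2) * (y - y2)) \<le> (\<gamma> * (1 - y)) * 1"
        using yy g0 by (intro mult_left_mono) auto
      thus ?thesis by (simp add: algebra_simps)
    qed
    thus "?F y \<le> \<gamma> * 1 * (1 - y)" unfolding Ff by (simp add: algebra_simps)
  qed (use y g0 in auto)
  show ?thesis using st1 un z y by auto
qed


lemma F0: "Fsel s 0 u y = (1 - y) * (u - s * y)"
  by (simp add: Fsel_fact)

lemma part_g0:
  fixes s u :: real
  assumes hs: "s > 0" and hu: "u > 0"
  shows "{y. Fsel s 0 u y = 0} = {1, u / s} \<and>
       loc_asym_stable {0..1} (Fsel s 0 u) (min 1 (u / s)) \<and>
       (u / s \<noteq> 1 \<longrightarrow>
          \<not> loc_asym_stable UNIV (Fsel s 0 u) (max 1 (u / s)) \<and>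
          (max 1 (u / s) \<in> {0..1} \<longrightarrow> \<not> loc_asym_stable {0..1} (Fsel s 0 u) (max 1 (u / s))))"
proof -
  let ?F = "Fsel s 0 u"
  define e where "e = u / s"
  have ue: "u / s = e" by (simp add: e_def)
  have z: "?F y = 0 \<longleftrightarrow> y = 1 \<or> y = e" for y
  proof -
    have "?F y = 0 \<longleftrightarrow> 1 - y = 0 \<or> u - s * y = 0" by (simp add: F0)
    moreover have "u - s * y = 0 \<longleftrightarrow> y = e" using hs by (auto simp: e_def field_simps)
    ultimately show ?thesis by auto
  qed
  have a0: "e > 0" using hs hu by (simp add: e_def)
  have lt: "s * y < u \<longleftrightarrow> y < e" "u < s * y \<longleftrightarrow> e < y" for y
    using hs by (auto simp: e_def field_simps)
  have st: "loc_asym_stable {0..1} ?F (min 1 (e))"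
  proof (cases "e < 1")
    case True
    have m: "min 1 (e) = e" using True by simp
    show ?thesis unfolding m
    proof (rule stab01[OF locLip_Fsel, where a=0 and b="(e + 1)/2"])
      fix y :: real assume "0 \<le> y" "y < e"
      thus "?F y > 0" using True lt[of y] unfolding F0 by (simp add: zero_less_mult_iff)
    next
      fix y :: real assume "e < y" "y \<le> (e + 1)/2"
      thus "?F y < 0" using True lt[of y] unfolding F0 by (simp add: mult_less_0_iff)
    qed (use True a0 z in auto)
  next
    case False
    have m: "min 1 (e) = 1" using False by simp
    show ?thesis unfolding m
    proof (rule stab01[OF locLip_Fsel, where a=0 and b=1])
      fix y :: real assume "0 \<le> y" "y < 1"
      thus "?F y > 0" using False lt[of y] unfolding F0 by (simp add: zero_less_mult_iff)
    qed (use z in auto)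
  qed
  have un: "\<not> loc_asym_stable S ?F (max 1 (e))" if ne: "e \<noteq> 1" and S: "S = UNIV \<or> (S = {0..1} \<and> e < 1)" for S
  proof (cases "e < 1")
    case True
    have m: "max 1 (e) = 1" using True by simp
    show ?thesis unfolding m
    proof (rule unstab_down[OF locLip_Fsel, where a="e" and e=1 and L=s])
      fix y :: real assume yy: "e < y" "y < 1"
      thus "?F y < 0" using lt[of y] unfolding F0 by (simp add: mult_less_0_iff)
      have "s * y - u = s * (y - e)" using hs by (simp add: e_def field_simps)
      moreover have "(1 - y) * (s * (y - e)) \<le> 1 * (s * (y - e))"
        by (rule mult_right_mono) (use yy a0 hs in auto)
      ultimately show "- ?F y \<le> s * (y - e)" unfolding F0 by (simp add: algebra_simps)
    qed (use True hs a0 S in auto)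
  next
    case False
    hence gt: "e > 1" using ne by simp
    have m: "max 1 (e) = e" using gt by simp
    show ?thesis unfolding m
    proof (rule unstab_down[OF locLip_Fsel, where a=1 and e="e" and L=u])
      fix y :: real assume yy: "1 < y" "y < e"
      thus "?F y < 0" using lt[of y] unfolding F0 by (simp add: mult_less_0_iff)
      have "(y - 1) * (u - s * y) \<le> (y - 1) * u"
        by (rule mult_left_mono) (use yy hs in auto)
      thus "- ?F y \<le> u * (y - 1)" unfolding F0 by (simp add: algebra_simps)
    qed (use gt hu S in auto)
  qed
  have "e \<noteq> 1 \<longrightarrow> max 1 (e) \<in> {0..1} \<longrightarrow> \<not> loc_asym_stable {0..1} ?F (max 1 (e))"
    using un[of "{0..1}"] by (cases "e < 1") auto
  moreover have "e \<noteq> 1 \<longrightarrow> \<not> loc_asym_stable UNIV ?F (max 1 (e))"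
    using un[of UNIV] by auto
  ultimately show ?thesis using z st unfolding ue by auto
qed


lemma part_gpos:
  fixes s \<gamma> u :: real
  assumes hs: "s > 0" and hu: "u > 0" and hg: "\<gamma> > 0"
  defines "ucheck \<equiv> ((s + \<gamma>) / 2)\<^sup>2 / \<gamma>"
    and "\<sigma> \<equiv> (1 + s / \<gamma>)\<^sup>2 - 4 * u / \<gamma>"
    and "y2 \<equiv> (1 + s / \<gamma> - sqrt ((1 + s / \<gamma>)\<^sup>2 - 4 * u / \<gamma>)) / 2"
    and "y3 \<equiv> (1 + s / \<gamma> + sqrt ((1 + s / \<gamma>)\<^sup>2 - 4 * u / \<gamma>)) / 2"
    and "Stab \<equiv> {y \<in> {0..1}. Fsel s \<gamma> u y = 0 \<and> loc_asym_stable {0..1} (Fsel s \<gamma> u) y}"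
  shows
       "(u > ucheck \<longrightarrow> {y. Fsel s \<gamma> u y = 0} = {1} \<and> loc_asym_stable {0..1} (Fsel s \<gamma> u) 1) \<and>
       (u \<le> ucheck \<longrightarrow>
          \<sigma> \<ge> 0 \<and> {y. Fsel s \<gamma> u y = 0} = {1, y2, y3} \<and>
          (u < s \<longrightarrow> 0 < y2 \<and> y2 < 1 \<and> 1 < y3 \<and> Stab = {y2}) \<and>
          (u = s \<and> \<gamma> < s \<longrightarrow> y2 = 1 \<and> 1 < y3 \<and> y3 = s / \<gamma> \<and> Stab = {1}) \<and>
          (u = s \<and> \<gamma> = s \<longrightarrow> y2 = 1 \<and> y3 = 1 \<and> Stab = {1}) \<and>
          (u = s \<and> \<gamma> > s \<longrightarrow> 0 < y2 \<and> y2 = s / \<gamma> \<and> y2 < 1 \<and> y3 = 1 \<and> Stab = {y2}) \<and>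
          (s < u \<and> u < ucheck \<and> \<gamma> < s \<longrightarrow> 1 < y2 \<and> y2 < y3 \<and> Stab = {1}) \<and>
          (s < u \<and> u < ucheck \<and> \<gamma> > s \<longrightarrow>
              0 < y2 \<and> y2 < y3 \<and> y3 < 1 \<and> Stab = {y2, 1}) \<and>
          (u = ucheck \<and> \<gamma> < s \<longrightarrow>
              1 < y2 \<and> y2 = y3 \<and> y2 = (\<gamma> + s) / (2 * \<gamma>) \<and> Stab = {1}) \<and>
          (u = ucheck \<and> \<gamma> = s \<longrightarrow> y2 = 1 \<and> y3 = 1 \<and> Stab = {1}) \<and>
          (u = ucheck \<and> \<gamma> > s \<longrightarrow>
              1/2 < y2 \<and> y2 = y3 \<and> y2 = (\<gamma> + s) / (2 * \<gamma>) \<and> y3 < 1 \<and> Stab = {1}))"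
proof -
  let ?F = "Fsel s \<gamma> u"
  define p where "p = 1 + s / \<gamma>"
  have sig: "\<sigma> * \<gamma>\<^sup>2 = (s + \<gamma>)\<^sup>2 - 4 * \<gamma> * u"
    using hg by (simp add: \<sigma>_def field_simps power2_eq_square)
  have uc: "u \<le> ucheck \<longleftrightarrow> 4 * \<gamma> * u \<le> (s + \<gamma>)\<^sup>2" "u < ucheck \<longleftrightarrow> 4 * \<gamma> * u < (s + \<gamma>)\<^sup>2"
    "u = ucheck \<longleftrightarrow> 4 * \<gamma> * u = (s + \<gamma>)\<^sup>2"
    using hg by (auto simp: ucheck_def field_simps power2_eq_square)
  have g2: "\<gamma>\<^sup>2 > 0" using hg by simp
  have q: "?F y = (1 - y) * (\<gamma> * y\<^sup>2 - (s + \<gamma>) * y + u)" for y by (rule Fsel_fact)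
  have part1: "u > ucheck \<longrightarrow> {y. ?F y = 0} = {1} \<and> loc_asym_stable {0..1} ?F 1"
  proof
    assume "u > ucheck"
    hence gt: "4 * \<gamma> * u > (s + \<gamma>)\<^sup>2" using uc by linarith
    have qpos: "\<gamma> * y\<^sup>2 - (s + \<gamma>) * y + u > 0" for y
    proof -
      have "4 * \<gamma> * (\<gamma> * y\<^sup>2 - (s + \<gamma>) * y + u) = (2 * \<gamma> * y - (s + \<gamma>))\<^sup>2 + (4 * \<gamma> * u - (s + \<gamma>)\<^sup>2)"
        by (simp add: algebra_simps power2_eq_square)
      moreover have "(2 * \<gamma> * y - (s + \<gamma>))\<^sup>2 + (4 * \<gamma> * u - (s + \<gamma>)\<^sup>2) > 0" using gt by (simp add: add_nonneg_pos)
      ultimately have "4 * \<gamma> * (\<gamma> * y\<^sup>2 - (s + \<gamma>) * y + u) > 0" by simp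
      thus ?thesis using hg by (simp add: zero_less_mult_iff)
    qed
    have S1: "Stab = {1}" unfolding Stab_def
    proof (rule Stab_one)
      fix y :: real assume "0 \<le> y" "y < 1"
      thus "?F y > 0" using qpos[of y] by (simp add: q)
    qed
    have "?F y = 0 \<longleftrightarrow> y = 1" for y using qpos[of y] by (auto simp: q)
    hence "{y. ?F y = 0} = {1}" by auto
    moreover have "loc_asym_stable {0..1} ?F 1" using S1 unfolding Stab_def by blast
    ultimately show "{y. ?F y = 0} = {1} \<and> loc_asym_stable {0..1} ?F 1" by blast
  qed
  have part2: "u \<le> ucheck \<longrightarrow>
          \<sigma> \<ge> 0 \<and> {y. ?F y = 0} = {1, y2, y3} \<and>
          (u < s \<longrightarrow> 0 < y2 \<and> y2 < 1 \<and> 1 < y3 \<and> Stab = {y2}) \<and>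
          (u = s \<and> \<gamma> < s \<longrightarrow> y2 = 1 \<and> 1 < y3 \<and> y3 = s / \<gamma> \<and> Stab = {1}) \<and>
          (u = s \<and> \<gamma> = s \<longrightarrow> y2 = 1 \<and> y3 = 1 \<and> Stab = {1}) \<and>
          (u = s \<and> \<gamma> > s \<longrightarrow> 0 < y2 \<and> y2 = s / \<gamma> \<and> y2 < 1 \<and> y3 = 1 \<and> Stab = {y2}) \<and>
          (s < u \<and> u < ucheck \<and> \<gamma> < s \<longrightarrow> 1 < y2 \<and> y2 < y3 \<and> Stab = {1}) \<and>
          (s < u \<and> u < ucheck \<and> \<gamma> > s \<longrightarrow>
              0 < y2 \<and> y2 < y3 \<and> y3 < 1 \<and> Stab = {y2, 1}) \<and>
          (u = ucheck \<and> \<gamma> < s \<longrightarrow>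
              1 < y2 \<and> y2 = y3 \<and> y2 = (\<gamma> + s) / (2 * \<gamma>) \<and> Stab = {1}) \<and>
          (u = ucheck \<and> \<gamma> = s \<longrightarrow> y2 = 1 \<and> y3 = 1 \<and> Stab = {1}) \<and>
          (u = ucheck \<and> \<gamma> > s \<longrightarrow>
              1/2 < y2 \<and> y2 = y3 \<and> y2 = (\<gamma> + s) / (2 * \<gamma>) \<and> y3 < 1 \<and> Stab = {1})"
  proof
    assume le: "u \<le> ucheck"
    have \<sigma>eq: "\<sigma> = ((s + \<gamma>)\<^sup>2 - 4 * \<gamma> * u) / \<gamma>\<^sup>2" using sig g2 by (simp add: field_simps)
    have \<sigma>0: "\<sigma> \<ge> 0" unfolding \<sigma>eq using le uc g2 by simp
    define r where "r = sqrt \<sigma>"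
    have r0: "r \<ge> 0" and r2: "r\<^sup>2 = \<sigma>" using \<sigma>0 by (auto simp: r_def)
    have y2r: "y2 = (p - r) / 2" and y3r: "y3 = (p + r) / 2"
      by (simp_all add: y2_def y3_def r_def \<sigma>_def p_def)
    have \<sigma>p: "\<sigma> = p\<^sup>2 - 4 * u / \<gamma>" by (simp add: \<sigma>_def p_def)
    have sum: "y2 + y3 = p" by (simp add: y2r y3r field_simps)
    have prod: "y2 * y3 = u / \<gamma>"
    proof -
      have "y2 * y3 = (p\<^sup>2 - r\<^sup>2) / 4" by (simp add: y2r y3r field_simps power2_eq_square)
      thus ?thesis using r2 \<sigma>p by simp
    qed
    have gp: "\<gamma> * p = \<gamma> + s" using hg by (simp add: p_def field_simps)
    have Ff: "?F y = \<gamma> * (1 - y) * (y - y2) * (y - y3)" for y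
    proof -
      have "\<gamma> * (y - y2) * (y - y3) = \<gamma> * y\<^sup>2 - (\<gamma> * (y2 + y3)) * y + \<gamma> * (y2 * y3)"
        by (simp add: algebra_simps power2_eq_square)
      also have "\<dots> = \<gamma> * y\<^sup>2 - (s + \<gamma>) * y + u" using hg by (simp add: sum prod gp)
      finally show ?thesis by (simp add: q mult.assoc)
    qed
    have p1: "(1 - y2) * (1 - y3) = (u - s) / \<gamma>"
    proof -
      have "(1 - y2) * (1 - y3) = 1 - (y2 + y3) + y2 * y3" by (simp add: algebra_simps)
      thus ?thesis using hg by (simp add: sum prod p_def field_simps)
    qed
    have y23: "y2 \<le> y3" using r0 by (simp add: y2r y3r)
    have pos23: "0 < y2" "0 < y3" if "0 < p" 
    proof -
      have "y2 * y3 > 0" using prod hu hg by simp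
      hence "(0 < y2 \<and> 0 < y3) \<or> (y2 < 0 \<and> y3 < 0)" by (simp add: zero_less_mult_iff)
      thus "0 < y2" "0 < y3" using sum that by auto
    qed
    have p0: "p > 0" using hs hg by (simp add: p_def add_pos_pos)
    have zer: "{y. ?F y = 0} = {1, y2, y3}" using hg by (auto simp: Ff)
    have c1: "u < s \<longrightarrow> 0 < y2 \<and> y2 < 1 \<and> 1 < y3 \<and> Stab = {y2}"
    proof
      assume us: "u < s"
      have "(1 - y2) * (1 - y3) < 0" using us hg by (simp add: p1 divide_neg_pos)
      hence "y2 < 1 \<and> 1 < y3" using y23 by (auto simp: mult_less_0_iff)
      moreover have "0 < y2" using pos23 p0 by simp
      moreover have "Stab = {y2}" unfolding Stab_def
        by (rule Stab_C1[OF hg Ff]) (use calculation in auto)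
      ultimately show "0 < y2 \<and> y2 < 1 \<and> 1 < y3 \<and> Stab = {y2}" by simp
    qed
    have c2: "u = s \<longrightarrow> (y2 = 1 \<or> y3 = 1) \<and> y2 + y3 = 1 + s / \<gamma>"
      using p1 sum hg by (auto simp: p_def)
    have c2a: "u = s \<and> \<gamma> < s \<longrightarrow> y2 = 1 \<and> 1 < y3 \<and> y3 = s / \<gamma> \<and> Stab = {1}"
    proof
      assume a: "u = s \<and> \<gamma> < s"
      have sg: "s / \<gamma> > 1" using a hg by simp
      have "y2 = 1" using c2 a sg y23 by auto
      moreover have "y3 = s / \<gamma>" using c2 a calculation by auto
      moreover have "Stab = {1}" unfolding Stab_def
      proof (rule Stab_one)
        fix y :: real assume "0 \<le> y" "y < 1"
        hence "y - y3 < 0" "y - y2 < 0" "1 - y > 0" using calculation sg by linarith+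
        thus "?F y > 0" using hg unfolding Ff by (intro mult_neg_neg mult_pos_neg mult_pos_pos)
      qed
      ultimately show "y2 = 1 \<and> 1 < y3 \<and> y3 = s / \<gamma> \<and> Stab = {1}" using sg by simp
    qed
    have c2b: "u = s \<and> \<gamma> = s \<longrightarrow> y2 = 1 \<and> y3 = 1 \<and> Stab = {1}"
    proof
      assume a: "u = s \<and> \<gamma> = s"
      have "y2 = 1 \<and> y3 = 1" using c2 a hs by auto
      moreover have "Stab = {1}" unfolding Stab_def
      proof (rule Stab_one)
        fix y :: real assume "0 \<le> y" "y < 1"
        thus "?F y > 0" using hg calculation unfolding Ff by (simp add: zero_less_mult_iff mult_less_0_iff)
      qed
      ultimately show "y2 = 1 \<and> y3 = 1 \<and> Stab = {1}" by simp
    qed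
    have c2c: "u = s \<and> \<gamma> > s \<longrightarrow> 0 < y2 \<and> y2 = s / \<gamma> \<and> y2 < 1 \<and> y3 = 1 \<and> Stab = {y2}"
    proof
      assume a: "u = s \<and> \<gamma> > s"
      have sg: "s / \<gamma> < 1" "s / \<gamma> > 0" using a hg hs by auto
      have "y3 = 1" using c2 a sg y23 by auto
      moreover have "y2 = s / \<gamma>" using c2 a calculation by auto
      moreover have "Stab = {y2}" unfolding Stab_def
        by (rule Stab_C1[OF hg Ff]) (use calculation sg in auto)
      ultimately show "0 < y2 \<and> y2 = s / \<gamma> \<and> y2 < 1 \<and> y3 = 1 \<and> Stab = {y2}" using sg by simp
    qed
    have c3: "s < u \<and> u < ucheck \<longrightarrow> y2 < y3 \<and> 0 < (1 - y2) * (1 - y3)"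
    proof
      assume a: "s < u \<and> u < ucheck"
      have "\<sigma> > 0" unfolding \<sigma>eq using a uc g2 by simp
      hence "r > 0" by (simp add: r_def)
      hence "y2 < y3" by (simp add: y2r y3r)
      moreover have "0 < (1 - y2) * (1 - y3)" using a hg by (simp add: p1)
      ultimately show "y2 < y3 \<and> 0 < (1 - y2) * (1 - y3)" by simp
    qed
    have c3a: "s < u \<and> u < ucheck \<and> \<gamma> < s \<longrightarrow> 1 < y2 \<and> y2 < y3 \<and> Stab = {1}"
    proof
      assume a: "s < u \<and> u < ucheck \<and> \<gamma> < s"
      have "p > 2" using a hg by (simp add: p_def)
      hence "1 < y2" using c3 a sum by (auto simp: zero_less_mult_iff)
      moreover have "y2 < y3" using c3 a by simp
      moreover have "Stab = {1}" unfolding Stab_def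
      proof (rule Stab_one)
        fix y :: real assume "0 \<le> y" "y < 1"
        thus "?F y > 0" using hg calculation unfolding Ff by (simp add: zero_less_mult_iff mult_less_0_iff)
      qed
      ultimately show "1 < y2 \<and> y2 < y3 \<and> Stab = {1}" by simp
    qed
    have c3b: "s < u \<and> u < ucheck \<and> \<gamma> > s \<longrightarrow> 0 < y2 \<and> y2 < y3 \<and> y3 < 1 \<and> Stab = {y2, 1}"
    proof
      assume a: "s < u \<and> u < ucheck \<and> s < \<gamma>"
      have "p < 2" using a hg by (simp add: p_def)
      hence "y3 < 1" using c3 a sum by (auto simp: zero_less_mult_iff)
      moreover have "y2 < y3" using c3 a by simp
      moreover have "0 < y2" using pos23 p0 by simp
      moreover have "Stab = {y2, 1}" unfolding Stab_def
        by (rule Stab_C4[OF hg Ff]) (use calculation in auto)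
      ultimately show "0 < y2 \<and> y2 < y3 \<and> y3 < 1 \<and> Stab = {y2, 1}" by simp
    qed
    have c4: "u = ucheck \<longrightarrow> y2 = (\<gamma> + s) / (2 * \<gamma>) \<and> y3 = (\<gamma> + s) / (2 * \<gamma>)"
    proof
      assume a: "u = ucheck"
      have "\<sigma> = 0" unfolding \<sigma>eq using a uc by simp
      hence "r = 0" by (simp add: r_def)
      hence "(p - r) / 2 = (\<gamma> + s) / (2 * \<gamma>)" "(p + r) / 2 = (\<gamma> + s) / (2 * \<gamma>)"
        using hg by (simp_all add: p_def field_simps)
      thus "y2 = (\<gamma> + s) / (2 * \<gamma>) \<and> y3 = (\<gamma> + s) / (2 * \<gamma>)" unfolding y2r y3r by blast
    qed
    have c4a: "u = ucheck \<and> \<gamma> < s \<longrightarrow> 1 < y2 \<and> y2 = y3 \<and> y2 = (\<gamma> + s) / (2 * \<gamma>) \<and> Stab = {1}"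
    proof
      assume a: "u = ucheck \<and> \<gamma> < s"
      have "1 < (\<gamma> + s) / (2 * \<gamma>)" using a hg by (simp add: field_simps)
      hence y: "1 < y2" "y2 = y3" "y2 = (\<gamma> + s) / (2 * \<gamma>)" using c4 a by auto
      moreover have "Stab = {1}" unfolding Stab_def
      proof (rule Stab_one)
        fix y :: real assume "0 \<le> y" "y < 1"
        thus "?F y > 0" using hg y unfolding Ff by (simp add: zero_less_mult_iff mult_less_0_iff)
      qed
      ultimately show "1 < y2 \<and> y2 = y3 \<and> y2 = (\<gamma> + s) / (2 * \<gamma>) \<and> Stab = {1}" by simp
    qed
    have c4b: "u = ucheck \<and> \<gamma> = s \<longrightarrow> y2 = 1 \<and> y3 = 1 \<and> Stab = {1}"
    proof
      assume a: "u = ucheck \<and> \<gamma> = s"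
      have y: "y2 = 1" "y3 = 1" using c4 a hg by auto
      moreover have "Stab = {1}" unfolding Stab_def
      proof (rule Stab_one)
        fix y :: real assume "0 \<le> y" "y < 1"
        thus "?F y > 0" using hg y unfolding Ff by (simp add: zero_less_mult_iff mult_less_0_iff)
      qed
      ultimately show "y2 = 1 \<and> y3 = 1 \<and> Stab = {1}" by simp
    qed
    have c4c: "u = ucheck \<and> \<gamma> > s \<longrightarrow> 1/2 < y2 \<and> y2 = y3 \<and> y2 = (\<gamma> + s) / (2 * \<gamma>) \<and> y3 < 1 \<and> Stab = {1}"
    proof
      assume a: "u = ucheck \<and> s < \<gamma>"
      have "1/2 < (\<gamma> + s) / (2 * \<gamma>)" "(\<gamma> + s) / (2 * \<gamma>) < 1" using a hg hs by (simp_all add: field_simps)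
      hence y: "1/2 < y2" "y2 = y3" "y2 = (\<gamma> + s) / (2 * \<gamma>)" "y3 < 1" using c4 a by auto
      moreover have "Stab = {1}" unfolding Stab_def
      proof (rule Stab_C5[OF hg])
        show "?F y = \<gamma> * (1 - y) * (y - y2) * (y - y2)" for y using Ff[of y] y by simp
      qed (use y in auto)
      ultimately show "1/2 < y2 \<and> y2 = y3 \<and> y2 = (\<gamma> + s) / (2 * \<gamma>) \<and> y3 < 1 \<and> Stab = {1}" by simp
    qed
    show "\<sigma> \<ge> 0 \<and> {y. ?F y = 0} = {1, y2, y3} \<and>
          (u < s \<longrightarrow> 0 < y2 \<and> y2 < 1 \<and> 1 < y3 \<and> Stab = {y2}) \<and>
          (u = s \<and> \<gamma> < s \<longrightarrow> y2 = 1 \<and> 1 < y3 \<and> y3 = s / \<gamma> \<and> Stab = {1}) \<and>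
          (u = s \<and> \<gamma> = s \<longrightarrow> y2 = 1 \<and> y3 = 1 \<and> Stab = {1}) \<and>
          (u = s \<and> \<gamma> > s \<longrightarrow> 0 < y2 \<and> y2 = s / \<gamma> \<and> y2 < 1 \<and> y3 = 1 \<and> Stab = {y2}) \<and>
          (s < u \<and> u < ucheck \<and> \<gamma> < s \<longrightarrow> 1 < y2 \<and> y2 < y3 \<and> Stab = {1}) \<and>
          (s < u \<and> u < ucheck \<and> \<gamma> > s \<longrightarrow>
              0 < y2 \<and> y2 < y3 \<and> y3 < 1 \<and> Stab = {y2, 1}) \<and>
          (u = ucheck \<and> \<gamma> < s \<longrightarrow>
              1 < y2 \<and> y2 = y3 \<and> y2 = (\<gamma> + s) / (2 * \<gamma>) \<and> Stab = {1}) \<and>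
          (u = ucheck \<and> \<gamma> = s \<longrightarrow> y2 = 1 \<and> y3 = 1 \<and> Stab = {1}) \<and>
          (u = ucheck \<and> \<gamma> > s \<longrightarrow>
              1/2 < y2 \<and> y2 = y3 \<and> y2 = (\<gamma> + s) / (2 * \<gamma>) \<and> y3 < 1 \<and> Stab = {1})"
      using \<sigma>0 zer c1 c2a c2b c2c c3a c3b c4a c4b c4c by blast
  qed
  show ?thesis using part1 part2 by blast
qed


theorem proposition2p2:
  fixes s \<gamma> u :: real
  assumes hs: "s > 0" and hu: "u > 0" and hg: "\<gamma> \<ge> 0"
  defines "F \<equiv> Fsel s \<gamma> u"
    and "uhat \<equiv> s"
    and "ucheck \<equiv> ((s + \<gamma>) / 2)\<^sup>2 / \<gamma>"
    and "\<sigma> \<equiv> (1 + s / \<gamma>)\<^sup>2 - 4 * u / \<gamma>"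
    and "y2 \<equiv> (1 + s / \<gamma> - sqrt ((1 + s / \<gamma>)\<^sup>2 - 4 * u / \<gamma>)) / 2"
    and "y3 \<equiv> (1 + s / \<gamma> + sqrt ((1 + s / \<gamma>)\<^sup>2 - 4 * u / \<gamma>)) / 2"
    and "Stab \<equiv> {y \<in> {0..1}. Fsel s \<gamma> u y = 0 \<and> loc_asym_stable {0..1} (Fsel s \<gamma> u) y}"
  shows
   "(\<gamma> = 0 \<longrightarrow>
       {y. F y = 0} = {1, u / s} \<and>
       (u = uhat \<longrightarrow> u / s = 1) \<and>
       loc_asym_stable {0..1} F (min 1 (u / s)) \<and>
       (u / s \<noteq> 1 \<longrightarrow>
          \<not> loc_asym_stable UNIV F (max 1 (u / s)) \<and>
          (max 1 (u / s) \<in> {0..1} \<longrightarrow> \<not> loc_asym_stable {0..1} F (max 1 (u / s)))))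
    \<and>
    (\<gamma> > 0 \<longrightarrow>
       (u > ucheck \<longrightarrow> {y. F y = 0} = {1} \<and> loc_asym_stable {0..1} F 1) \<and>
       (u \<le> ucheck \<longrightarrow>
          \<sigma> \<ge> 0 \<and> {y. F y = 0} = {1, y2, y3} \<and>
          (u < uhat \<longrightarrow> 0 < y2 \<and> y2 < 1 \<and> 1 < y3 \<and> Stab = {y2}) \<and>
          (u = uhat \<and> \<gamma> < s \<longrightarrow> y2 = 1 \<and> 1 < y3 \<and> y3 = s / \<gamma> \<and> Stab = {1}) \<and>
          (u = uhat \<and> \<gamma> = s \<longrightarrow> y2 = 1 \<and> y3 = 1 \<and> Stab = {1}) \<and>
          (u = uhat \<and> \<gamma> > s \<longrightarrow> 0 < y2 \<and> y2 = s / \<gamma> \<and> y2 < 1 \<and> y3 = 1 \<and> Stab = {y2}) \<and>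
          (uhat < u \<and> u < ucheck \<and> \<gamma> < s \<longrightarrow> 1 < y2 \<and> y2 < y3 \<and> Stab = {1}) \<and>
          (uhat < u \<and> u < ucheck \<and> \<gamma> > s \<longrightarrow>
              0 < y2 \<and> y2 < y3 \<and> y3 < 1 \<and> Stab = {y2, 1}) \<and>
          (u = ucheck \<and> \<gamma> < s \<longrightarrow>
              1 < y2 \<and> y2 = y3 \<and> y2 = (\<gamma> + s) / (2 * \<gamma>) \<and> Stab = {1}) \<and>
          (u = ucheck \<and> \<gamma> = s \<longrightarrow> y2 = 1 \<and> y3 = 1 \<and> Stab = {1}) \<and>
          (u = ucheck \<and> \<gamma> > s \<longrightarrow>
              1/2 < y2 \<and> y2 = y3 \<and> y2 = (\<gamma> + s) / (2 * \<gamma>) \<and> y3 < 1 \<and> Stab = {1})))"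
  proof -
  have A: "\<gamma> = 0 \<longrightarrow>
       {y. F y = 0} = {1, u / s} \<and>
       (u = uhat \<longrightarrow> u / s = 1) \<and>
       loc_asym_stable {0..1} F (min 1 (u / s)) \<and>
       (u / s \<noteq> 1 \<longrightarrow>
          \<not> loc_asym_stable UNIV F (max 1 (u / s)) \<and>
          (max 1 (u / s) \<in> {0..1} \<longrightarrow> \<not> loc_asym_stable {0..1} F (max 1 (u / s))))"
  proof
    assume g: "\<gamma> = 0"
    show "{y. F y = 0} = {1, u / s} \<and>
       (u = uhat \<longrightarrow> u / s = 1) \<and>
       loc_asym_stable {0..1} F (min 1 (u / s)) \<and>
       (u / s \<noteq> 1 \<longrightarrow>
          \<not> loc_asym_stable UNIV F (max 1 (u / s)) \<and>
          (max 1 (u / s) \<in> {0..1} \<longrightarrow> \<not> loc_asym_stable {0..1} F (max 1 (u / s))))"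
      using part_g0[OF hs hu] hs unfolding F_def uhat_def g by simp
  qed
  have B: "\<gamma> > 0 \<longrightarrow>
       (u > ucheck \<longrightarrow> {y. F y = 0} = {1} \<and> loc_asym_stable {0..1} F 1) \<and>
       (u \<le> ucheck \<longrightarrow>
          \<sigma> \<ge> 0 \<and> {y. F y = 0} = {1, y2, y3} \<and>
          (u < uhat \<longrightarrow> 0 < y2 \<and> y2 < 1 \<and> 1 < y3 \<and> Stab = {y2}) \<and>
          (u = uhat \<and> \<gamma> < s \<longrightarrow> y2 = 1 \<and> 1 < y3 \<and> y3 = s / \<gamma> \<and> Stab = {1}) \<and>
          (u = uhat \<and> \<gamma> = s \<longrightarrow> y2 = 1 \<and> y3 = 1 \<and> Stab = {1}) \<and>
          (u = uhat \<and> \<gamma> > s \<longrightarrow> 0 < y2 \<and> y2 = s / \<gamma> \<and> y2 < 1 \<and> y3 = 1 \<and> Stab = {y2}) \<and>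
          (uhat < u \<and> u < ucheck \<and> \<gamma> < s \<longrightarrow> 1 < y2 \<and> y2 < y3 \<and> Stab = {1}) \<and>
          (uhat < u \<and> u < ucheck \<and> \<gamma> > s \<longrightarrow>
              0 < y2 \<and> y2 < y3 \<and> y3 < 1 \<and> Stab = {y2, 1}) \<and>
          (u = ucheck \<and> \<gamma> < s \<longrightarrow>
              1 < y2 \<and> y2 = y3 \<and> y2 = (\<gamma> + s) / (2 * \<gamma>) \<and> Stab = {1}) \<and>
          (u = ucheck \<and> \<gamma> = s \<longrightarrow> y2 = 1 \<and> y3 = 1 \<and> Stab = {1}) \<and>
          (u = ucheck \<and> \<gamma> > s \<longrightarrow>
              1/2 < y2 \<and> y2 = y3 \<and> y2 = (\<gamma> + s) / (2 * \<gamma>) \<and> y3 < 1 \<and> Stab = {1}))"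
  proof
    assume g: "\<gamma> > 0"
    show "(u > ucheck \<longrightarrow> {y. F y = 0} = {1} \<and> loc_asym_stable {0..1} F 1) \<and>
       (u \<le> ucheck \<longrightarrow>
          \<sigma> \<ge> 0 \<and> {y. F y = 0} = {1, y2, y3} \<and>
          (u < uhat \<longrightarrow> 0 < y2 \<and> y2 < 1 \<and> 1 < y3 \<and> Stab = {y2}) \<and>
          (u = uhat \<and> \<gamma> < s \<longrightarrow> y2 = 1 \<and> 1 < y3 \<and> y3 = s / \<gamma> \<and> Stab = {1}) \<and>
          (u = uhat \<and> \<gamma> = s \<longrightarrow> y2 = 1 \<and> y3 = 1 \<and> Stab = {1}) \<and>
          (u = uhat \<and> \<gamma> > s \<longrightarrow> 0 < y2 \<and> y2 = s / \<gamma> \<and> y2 < 1 \<and> y3 = 1 \<and> Stab = {y2}) \<and>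
          (uhat < u \<and> u < ucheck \<and> \<gamma> < s \<longrightarrow> 1 < y2 \<and> y2 < y3 \<and> Stab = {1}) \<and>
          (uhat < u \<and> u < ucheck \<and> \<gamma> > s \<longrightarrow>
              0 < y2 \<and> y2 < y3 \<and> y3 < 1 \<and> Stab = {y2, 1}) \<and>
          (u = ucheck \<and> \<gamma> < s \<longrightarrow>
              1 < y2 \<and> y2 = y3 \<and> y2 = (\<gamma> + s) / (2 * \<gamma>) \<and> Stab = {1}) \<and>
          (u = ucheck \<and> \<gamma> = s \<longrightarrow> y2 = 1 \<and> y3 = 1 \<and> Stab = {1}) \<and>
          (u = ucheck \<and> \<gamma> > s \<longrightarrow>
              1/2 < y2 \<and> y2 = y3 \<and> y2 = (\<gamma> + s) / (2 * \<gamma>) \<and> y3 < 1 \<and> Stab = {1}))"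
      using part_gpos[OF hs hu g] unfolding F_def uhat_def ucheck_def \<sigma>_def y2_def y3_def Stab_def
      by blast
  qed
  show ?thesis using A B by blast
qed

end
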